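(* Let $0<x_1<x_2<\dots<x_n<1$ and $a_1,\dots,a_n>0$ with $a_1+\dots+a_n=1$, and let $\mu=\sum_{i=1}^n a_i\delta_{x_i}$. Let $K$, $\tau$, $\mathbf{P}$ and $\nu$ be as in the setting below. Then $$s_\nu(z)=\frac{1}{z(1-z)\sum_{i=1}^n\frac{a_i}{z-(1-x_i)}},$$ and $\nu$ is purely atomic with exactly $n+1$ atoms, located in increasing order at $0,y_1,\dots,y_{n-1},1$, where $y_i$ is the unique root of $y\mapsto\sum_{j=1}^n\frac{a_j}{y-(1-x_j)}$ in the interval $(1-x_{n-i+1},1-x_{n-i})$. The mass of each atom is $\nu(\{y_i\})=\lim_{z\to y_i}(y_i-z)s_\nu(z)$ (the residue of the rational function $-s_\nu$ at $y_i$). Consequently, for all $N\ge1$, $$\mathbf{P}(N\in\tau)=\frac{1}{m_K}+\sum_{i=1}^{n-1}y_i^N\,\nu(\{y_i\}).$$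
   Context: Setting: $\mu$ is a probability measure on $[0,1]$; $K$ is the probability measure on $\mathbf{N}\cup\{\infty\}$ with $K(n)=\int_0^1(1-x)^{n-1}x\,\mathrm{d}\mu(x)$ for $n\ge1$ and $K(\{\infty\})=\mu(\{0\})$; $\tau=\{\tau_i:i\ge0\}$ with $\tau_0=0$, $\tau_n=\eta_1+\dots+\eta_n$, $(\eta_i)$ i.i.d. with law $K$, and $\mathbf{P}$ its law; $\nu$ is the probability measure on $[0,1]$ with $\mathbf{P}(N\in\tau)=\int_0^1x^N\mathrm{d}\nu(x)$ for all $N\ge0$, equivalently $s_\nu(z)s_\mu(1-z)=\frac{1}{z(1-z)}$ on $\mathbf{C}_+$. $m_K=\sum_{n\ge1}nK(n)$. Stieltjes transform: $s_\mu(z)=\int\frac{\mathrm{d}\mu(x)}{x-z}$. *)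

theory Defs
  imports "HOL-Probability.Probability"
begin

text \<open>The inter-arrival law K for mu = sum_i a_i delta_{x_i} (i = 1..n), written out:
  K(m) = integral of (1-x)^(m-1) x d mu(x) = sum_i a_i (1-x_i)^(m-1) x_i for m >= 1.
  Since all x_i > 0, K(infinity) = mu({0}) = 0, so K is a law on the positive integers.\<close>
definition Kdisc :: "nat \<Rightarrow> (nat \<Rightarrow> real) \<Rightarrow> (nat \<Rightarrow> real) \<Rightarrow> nat \<Rightarrow> real" where
  "Kdisc n a x m = (if m = 0 then 0 else (\<Sum>i=1..n. a i * (1 - x i) ^ (m - 1) * x i))"

fun conv_pow :: "(nat \<Rightarrow> real) \<Rightarrow> nat \<Rightarrow> nat \<Rightarrow> real" where
  "conv_pow K 0 N = (if N = 0 then 1 else 0)"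
| "conv_pow K (Suc m) N = (\<Sum>k\<le>N. K k * conv_pow K m (N - k))"

text \<open>Renewal mass P(N in tau) = sum over m of P(tau_m = N).\<close>
definition renewal_prob :: "(nat \<Rightarrow> real) \<Rightarrow> nat \<Rightarrow> real" where
  "renewal_prob K N = (\<Sum>m. conv_pow K m N)"

definition mean_K :: "(nat \<Rightarrow> real) \<Rightarrow> real" where
  "mean_K K = (\<Sum>m. real m * K m)"

definition stieltjes :: "real measure \<Rightarrow> complex \<Rightarrow> complex" where
  "stieltjes M z = (LINT t|M. 1 / (complex_of_real t - z))"

end

theory Submission
  imports Defs "HOL-Computational_Algebra.Polynomial"
begin

lemma monic_lin_prod_degree:
  fixes V :: "'a::field set"
  assumes "finite V"
  shows "degree (\<Prod>v\<in>V. [:-v,1:]) = card V" "coeff (\<Prod>v\<in>V. [:-v,1:]) (card V) = 1"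
proof -
  have d: "degree (\<Prod>v\<in>V. [:-v,1:]) = card V"
    by (subst degree_prod_eq_sum_degree) auto
  show "degree (\<Prod>v\<in>V. [:-v,1:]) = card V" by (rule d)
  have "lead_coeff (\<Prod>v\<in>V. [:-v,1:]) = 1" by (simp add: lead_coeff_prod)
  thus "coeff (\<Prod>v\<in>V. [:-v,1:]) (card V) = 1" using d by simp
qed

lemma lagrange_interp:
  fixes p :: "'a::field poly" and W :: "'a set"
  assumes W: "finite W" and deg: "degree p < card W"
  shows "p = (\<Sum>w\<in>W. smult (poly p w / (\<Prod>v\<in>W-{w}. w - v)) (\<Prod>v\<in>W-{w}. [:-v,1:]))"
    (is "p = ?q")
proof (rule poly_eqI_degree[where A = W])
  fix z assume z: "z \<in> W"
  have "poly ?q z = (\<Sum>w\<in>W. poly p w / (\<Prod>v\<in>W-{w}. w - v) * (\<Prod>v\<in>W-{w}. z - v))"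
    by (simp add: poly_sum poly_prod)
  also have "\<dots> = poly p z / (\<Prod>v\<in>W-{z}. z - v) * (\<Prod>v\<in>W-{z}. z - v)"
  proof -
    have "(\<Sum>w\<in>W-{z}. poly p w / (\<Prod>v\<in>W-{w}. w - v) * (\<Prod>v\<in>W-{w}. z - v)) = 0"
    proof (rule sum.neutral, rule ballI)
      fix i assume i: "i \<in> W - {z}"
      have "(\<Prod>v\<in>W - {i}. z - v) = 0" using i z W by (intro prod_zero) auto
      thus "poly p i / (\<Prod>v\<in>W - {i}. i - v) * (\<Prod>v\<in>W - {i}. z - v) = 0" by simp
    qed
    thus ?thesis using W z by (simp add: sum.remove)
  qed
  also have "\<dots> = poly p z" using W by simp
  finally show "poly p z = poly ?q z" by simp
next
  show "degree p < card W" by fact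
  have "degree ?q \<le> card W - 1"
  proof (rule degree_sum_le[THEN order.trans])
    show "finite W" by fact
    fix w assume "w \<in> W"
    have "degree (smult (poly p w / (\<Prod>v\<in>W-{w}. w - v)) (\<Prod>v\<in>W-{w}. [:-v,1:])) \<le> card (W - {w})"
      using monic_lin_prod_degree(1)[of "W-{w}"] W degree_smult_le by (metis finite_Diff)
    thus "degree (smult (poly p w / (\<Prod>v\<in>W-{w}. w - v)) (\<Prod>v\<in>W-{w}. [:-v,1:])) \<le> card W - 1"
      using \<open>w \<in> W\<close> W by simp
  qed simp
  thus "degree ?q < card W" using deg by linarith
qed

lemma lagrange_coeff:
  fixes p :: "'a::field poly" and W :: "'a set"
  assumes W: "finite W" and deg: "degree p < card W"
  shows "coeff p (card W - 1) = (\<Sum>w\<in>W. poly p w / (\<Prod>v\<in>W-{w}. w - v))"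
proof -
  have "coeff p (card W - 1) = (\<Sum>w\<in>W. poly p w / (\<Prod>v\<in>W-{w}. w - v) * coeff (\<Prod>v\<in>W-{w}. [:-v,1:]) (card W - 1))"
    by (subst lagrange_interp[OF W deg]) (simp add: coeff_sum)
  also have "\<dots> = (\<Sum>w\<in>W. poly p w / (\<Prod>v\<in>W-{w}. w - v))"
  proof (rule sum.cong[OF refl])
    fix w assume "w \<in> W"
    hence "card (W - {w}) = card W - 1" using W by simp
    thus "poly p w / (\<Prod>v\<in>W-{w}. w - v) * coeff (\<Prod>v\<in>W-{w}. [:-v,1:]) (card W - 1) = poly p w / (\<Prod>v\<in>W-{w}. w - v)"
      using monic_lin_prod_degree(2)[of "W-{w}"] W by simp
  qed
  finally show ?thesis .
qed

locale cor =
  fixes n :: nat and x a :: "nat \<Rightarrow> real"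
  assumes n_pos: "n \<ge> 1" and x_pos: "0 < x 1"
    and x_mono: "\<And>i. 1 \<le> i \<Longrightarrow> i < n \<Longrightarrow> x i < x (Suc i)" and x_lt1: "x n < 1"
    and a_pos: "\<And>i. 1 \<le> i \<Longrightarrow> i \<le> n \<Longrightarrow> a i > 0" and a_sum: "(\<Sum>i=1..n. a i) = 1"
begin

lemma x_strict: "1 \<le> i \<Longrightarrow> i < j \<Longrightarrow> j \<le> n \<Longrightarrow> x i < x j"
proof (induction j)
  case 0 then show ?case by simp
next
  case (Suc j)
  show ?case
  proof (cases "i = j")
    case True then show ?thesis using Suc x_mono by simp
  next
    case False
    then have "x i < x j" using Suc by simp
    also have "x j < x (Suc j)" using Suc False by (intro x_mono) auto
    finally show ?thesis .
  qed
qed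

lemma x_le: "1 \<le> i \<Longrightarrow> i \<le> j \<Longrightarrow> j \<le> n \<Longrightarrow> x i \<le> x j"
  using x_strict[of i j] by (cases "i = j") auto

lemma x_01: "1 \<le> i \<Longrightarrow> i \<le> n \<Longrightarrow> 0 < x i \<and> x i < 1"
  using x_le[of 1 i] x_le[of i n] x_pos x_lt1 by auto

definition f :: "real \<Rightarrow> real" where
  "f t = (\<Sum>j=1..n. a j / (t - (1 - x j)))"

lemma f_strict:
  assumes st: "s < t" and sides: "\<And>j. j \<in> {1..n} \<Longrightarrow> (s - (1 - x j)) * (t - (1 - x j)) > 0"
  shows "f t < f s"
proof -
  have "f s - f t = (\<Sum>j=1..n. a j / (s - (1 - x j)) - a j / (t - (1 - x j)))"
    unfolding f_def by (simp add: sum_subtractf)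
  also have "\<dots> > 0"
  proof (rule sum_pos)
    show "finite {1..n}" by simp
    show "{1..n} \<noteq> {}" using n_pos by simp
    fix j assume j: "j \<in> {1..n}"
    define u where "u = s - (1 - x j)"
    define v where "v = t - (1 - x j)"
    have uv: "u * v > 0" using sides[OF j] unfolding u_def v_def .
    have "u \<noteq> 0" "v \<noteq> 0" using uv by auto
    then have "a j / u - a j / v = a j * (v - u) / (u * v)"
      by (simp add: field_simps)
    moreover have "v - u > 0" using st unfolding u_def v_def by simp
    moreover have "a j > 0" using a_pos j by auto
    ultimately show "0 < a j / (s - (1 - x j)) - a j / (t - (1 - x j))"
      unfolding u_def[symmetric] v_def[symmetric] using uv by simp
  qed
  finally show ?thesis by simp
qed

lemma b_outside:
  assumes k: "1 \<le> k" "k < n" and j: "j \<in> {1..n}"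
  shows "1 - x j \<ge> 1 - x k \<or> 1 - x j \<le> 1 - x (Suc k)"
proof (cases "j \<le> k")
  case True then show ?thesis using x_le[of j k] j k by auto
next
  case False then show ?thesis using x_le[of "Suc k" j] j k by auto
qed

lemma f_strict_int:
  assumes k: "1 \<le> k" "k < n" and s: "1 - x (Suc k) < s" and st: "s < t" and t: "t < 1 - x k"
  shows "f t < f s"
proof (rule f_strict[OF st])
  fix j assume j: "j \<in> {1..n}"
  from b_outside[OF k j] show "(s - (1 - x j)) * (t - (1 - x j)) > 0"
  proof
    assume "1 - x j \<ge> 1 - x k"
    then have "s - (1 - x j) < 0" "t - (1 - x j) < 0" using s st t by auto
    then show ?thesis by (simp add: mult_neg_neg)
  next
    assume "1 - x j \<le> 1 - x (Suc k)"
    then have "s - (1 - x j) > 0" "t - (1 - x j) > 0" using s st t by auto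
    then show ?thesis by simp
  qed
qed

lemma root_ex:
  assumes k: "1 \<le> k" "k < n"
  shows "\<exists>t. 1 - x (Suc k) < t \<and> t < 1 - x k \<and> f t = 0"
proof -
  define c where "c = 1 - x (Suc k)"
  define d where "d = 1 - x k"
  have cd: "c < d" unfolding c_def d_def using x_mono k by auto
  define R where "R = {1..n} - {k, Suc k}"
  define g where "g t = a (Suc k) * (d - t) - a k * (t - c)
       + (t - c) * (d - t) * (\<Sum>j\<in>R. a j / (t - (1 - x j)))" for t
  have Rout: "t - (1 - x j) \<noteq> 0" if "j \<in> R" "c \<le> t" "t \<le> d" for j t
  proof -
    have j: "j \<in> {1..n}" "j \<noteq> k" "j \<noteq> Suc k" using that unfolding R_def by auto
    show ?thesis
    proof (cases "j < k")
      case True then have "x j < x k" using x_strict j k by auto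
      then show ?thesis using that unfolding d_def by auto
    next
      case False then have "Suc k < j" using j by auto
      then have "x (Suc k) < x j" using x_strict j k by auto
      then show ?thesis using that unfolding c_def by auto
    qed
  qed
  have cont: "continuous_on {c..d} g"
    unfolding g_def using Rout by (intro continuous_intros) auto
  have akp: "a k > 0" "a (Suc k) > 0" using a_pos k by auto
  have gc: "g c > 0" using akp cd unfolding g_def by simp
  have gd: "g d < 0" using akp cd unfolding g_def by simp
  obtain t where t: "c \<le> t" "t \<le> d" "g t = 0"
    using IVT2'[of g d 0 c] gc gd cd cont by auto
  have tc: "t \<noteq> c" "t \<noteq> d" using t gc gd by auto
  have ft: "f t * ((t - c) * (d - t)) = g t"
  proof -
    have kin: "k \<in> {1..n}" "Suc k \<in> {1..n}" using k by auto
    have split: "{1..n} = insert k (insert (Suc k) R)" using kin unfolding R_def by auto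
    have nR: "k \<notin> insert (Suc k) R" "Suc k \<notin> R" "finite R" unfolding R_def by auto
    have "f t = (\<Sum>j\<in>insert k (insert (Suc k) R). a j / (t - (1 - x j)))"
      unfolding f_def by (subst split) (rule refl)
    also have "\<dots> = a k / (t - d) + a (Suc k) / (t - c) + (\<Sum>j\<in>R. a j / (t - (1 - x j)))"
      using nR unfolding c_def d_def by (simp add: sum.insert_if)
    finally have "f t = a k / (t - d) + a (Suc k) / (t - c) + (\<Sum>j\<in>R. a j / (t - (1 - x j)))" .
    moreover have "t - d \<noteq> 0" "t - c \<noteq> 0" using tc by auto
    then have e1: "a k / (t - d) * ((t - c) * (d - t)) = - a k * (t - c)"
      and e2: "a (Suc k) / (t - c) * ((t - c) * (d - t)) = a (Suc k) * (d - t)"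
      by (simp_all add: field_simps)
    ultimately show ?thesis unfolding g_def by (simp only: distrib_right e1 e2) (simp add: algebra_simps)
  qed
  have "f t = 0" using ft t tc by simp
  moreover have "c < t" "t < d" using t tc by auto
  ultimately show ?thesis unfolding c_def d_def by (intro exI[of _ t]) auto
qed

definition y :: "nat \<Rightarrow> real" where
  "y i = (SOME t. 1 - x (n - i + 1) < t \<and> t < 1 - x (n - i) \<and> f t = 0)"

lemma y_prop:
  assumes i: "i \<in> {1..n-1}"
  shows "1 - x (n - i + 1) < y i \<and> y i < 1 - x (n - i) \<and> f (y i) = 0"
proof -
  have "\<exists>t. 1 - x (Suc (n - i)) < t \<and> t < 1 - x (n - i) \<and> f t = 0"
    using i by (intro root_ex) auto
  then have "\<exists>t. 1 - x (n - i + 1) < t \<and> t < 1 - x (n - i) \<and> f t = 0" by simp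
  then show ?thesis unfolding y_def by (rule someI_ex)
qed

lemma y_unique:
  assumes i: "i \<in> {1..n-1}" and t: "1 - x (n - i + 1) < t" "t < 1 - x (n - i)"
  shows "f t = 0 \<longleftrightarrow> t = y i"
proof
  assume ft: "f t = 0"
  have k: "1 \<le> n - i" "n - i < n" using i by auto
  have yp: "1 - x (Suc (n - i)) < y i" "y i < 1 - x (n - i)" "f (y i) = 0" using y_prop[OF i] by auto
  show "t = y i"
  proof (rule ccontr)
    assume "t \<noteq> y i"
    then consider "t < y i" | "y i < t" by linarith
    then show False
    proof cases
      case 1 then show ?thesis using f_strict_int[OF k, of t "y i"] t yp ft by simp
    next
      case 2 then show ?thesis using f_strict_int[OF k, of "y i" t] t yp ft by simp
    qed
  qed
next
  assume "t = y i" then show "f t = 0" using y_prop[OF i] by simp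
qed

lemma y_mono: "1 \<le> i \<Longrightarrow> i < n - 1 \<Longrightarrow> y i < y (Suc i)"
  using y_prop[of i] y_prop[of "Suc i"] by (simp add: Suc_diff_Suc)

lemma y_strict: "1 \<le> i \<Longrightarrow> i < j \<Longrightarrow> j \<le> n - 1 \<Longrightarrow> y i < y j"
proof (induction j)
  case 0 then show ?case by simp
next
  case (Suc j)
  show ?case
  proof (cases "i = j")
    case True then show ?thesis using Suc y_mono by simp
  next
    case False
    then have "y i < y j" using Suc by simp
    also have "y j < y (Suc j)" using Suc False by (intro y_mono) auto
    finally show ?thesis .
  qed
qed

lemma y_inj: "inj_on y {1..n-1}"
proof (rule inj_onI)
  fix i j assume "i \<in> {1..n-1}" "j \<in> {1..n-1}" "y i = y j"
  then show "i = j" using y_strict[of i j] y_strict[of j i] by (cases i j rule: linorder_cases) auto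
qed

lemma y_01: assumes i: "i \<in> {1..n-1}" shows "0 < y i \<and> y i < 1"
proof -
  have "1 \<le> n - i" "n - i + 1 \<le> n" "n - i \<le> n" using i by auto
  then show ?thesis using y_prop[OF i] x_01[of "n - i + 1"] x_01[of "n - i"] by auto
qed

lemma y_not_b: assumes i: "i \<in> {1..n-1}" and j: "j \<in> {1..n}" shows "y i \<noteq> 1 - x j"
proof -
  have "1 \<le> n - i" "n - i < n" using i by auto
  then show ?thesis using y_prop[OF i] b_outside[of "n - i" j] j by auto
qed

end

lemma pf_mult:
  fixes z :: "'a::field"
  assumes I: "finite I" and nz: "\<And>j. j \<in> I \<Longrightarrow> z \<noteq> \<beta> j"
  shows "(\<Sum>i\<in>I. \<alpha> i / (z - \<beta> i)) * (\<Prod>j\<in>I. z - \<beta> j) = (\<Sum>i\<in>I. \<alpha> i * (\<Prod>j\<in>I-{i}. z - \<beta> j))"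
  unfolding sum_distrib_right
proof (rule sum.cong[OF refl])
  fix i assume i: "i \<in> I"
  have "(\<Prod>j\<in>I. z - \<beta> j) = (z - \<beta> i) * (\<Prod>j\<in>I-{i}. z - \<beta> j)"
    using I i by (simp add: prod.remove)
  moreover have "z - \<beta> i \<noteq> 0" using nz i by simp
  ultimately show "\<alpha> i / (z - \<beta> i) * (\<Prod>j\<in>I. z - \<beta> j) = \<alpha> i * (\<Prod>j\<in>I-{i}. z - \<beta> j)"
    by simp
qed

lemma geo_sum:
  fixes w b :: real
  shows "(w - b) * (\<Sum>k\<in>{1..N}. b ^ (k - 1) * w ^ (N - k)) = w ^ N - b ^ N"
proof (induction N)
  case 0 then show ?case by simp
next
  case (Suc N)
  have "(\<Sum>k\<in>{1..Suc N}. b ^ (k - 1) * w ^ (Suc N - k))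
      = (\<Sum>k\<in>{1..N}. b ^ (k - 1) * w ^ (Suc N - k)) + b ^ N"
    by simp
  also have "(\<Sum>k\<in>{1..N}. b ^ (k - 1) * w ^ (Suc N - k)) = w * (\<Sum>k\<in>{1..N}. b ^ (k - 1) * w ^ (N - k))"
    unfolding sum_distrib_left
    by (rule sum.cong[OF refl]) (simp add: Suc_diff_le)
  finally have "(\<Sum>k\<in>{1..Suc N}. b ^ (k - 1) * w ^ (Suc N - k)) = w * (\<Sum>k\<in>{1..N}. b ^ (k - 1) * w ^ (N - k)) + b ^ N" .
  then have "(w - b) * (\<Sum>k\<in>{1..Suc N}. b ^ (k - 1) * w ^ (Suc N - k))
      = w * ((w - b) * (\<Sum>k\<in>{1..N}. b ^ (k - 1) * w ^ (N - k))) + (w - b) * b ^ N"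
    by (simp add: algebra_simps)
  also have "\<dots> = w ^ Suc N - b ^ Suc N" by (simp only: Suc.IH) (simp add: algebra_simps)
  finally show ?case .
qed

context cor
begin

definition Y :: "real set" where "Y = y ` {1..n-1}"
definition W :: "real set" where "W = insert 0 (insert 1 Y)"

lemma Y_fin: "finite Y" unfolding Y_def by simp
lemma W_fin: "finite W" unfolding W_def using Y_fin by simp
lemma Y_01: "v \<in> Y \<Longrightarrow> 0 < v \<and> v < 1" unfolding Y_def using y_01 by auto
lemma card_Y: "card Y = n - 1" unfolding Y_def using y_inj by (simp add: card_image)
lemma card_W: "card W = n + 1"
proof -
  have "0 \<notin> Y" "1 \<notin> Y" using Y_01 by force+
  then show ?thesis unfolding W_def using Y_fin card_Y n_pos by simp
qed
lemma W_01: "w \<in> W \<Longrightarrow> 0 \<le> w \<and> w \<le> 1" unfolding W_def using Y_01 by force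
lemma W_not_b: assumes w: "w \<in> W" and j: "j \<in> {1..n}" shows "w \<noteq> 1 - x j"
proof -
  have "0 < x j" "x j < 1" using x_01[of j] j by auto
  moreover have "w \<in> Y \<Longrightarrow> w \<noteq> 1 - x j"
  proof -
    assume "w \<in> Y"
    then obtain i where i: "i \<in> {1..n-1}" "w = y i" unfolding Y_def by auto
    then show ?thesis using y_not_b[OF i(1) j] by simp
  qed
  ultimately show ?thesis using w unfolding W_def by auto
qed

definition Qr :: "real \<Rightarrow> real" where "Qr t = (\<Prod>j=1..n. t - (1 - x j))"
definition c :: "real \<Rightarrow> real" where "c w = Qr w / (\<Prod>v\<in>W-{w}. w - v)"

lemma c_nz: assumes w: "w \<in> W" shows "c w \<noteq> 0"
proof -
  have "Qr w \<noteq> 0" unfolding Qr_def using W_not_b[OF w] by auto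
  moreover have "(\<Prod>v\<in>W-{w}. w - v) \<noteq> 0" using W_fin by auto
  ultimately show ?thesis unfolding c_def by simp
qed

definition Qp :: "complex poly" where "Qp = (\<Prod>j=1..n. [:- complex_of_real (1 - x j), 1:])"

lemma poly_Qp: "poly Qp z = (\<Prod>j=1..n. z - complex_of_real (1 - x j))"
  unfolding Qp_def by (simp add: poly_prod algebra_simps)

lemma Qp_deg: "degree Qp = n" "coeff Qp n = 1"
proof -
  show d: "degree Qp = n" unfolding Qp_def by (subst degree_prod_eq_sum_degree) auto
  have "lead_coeff Qp = 1" unfolding Qp_def by (simp add: lead_coeff_prod)
  then show "coeff Qp n = 1" using d by simp
qed

lemma inj_cr: "inj_on complex_of_real A" by (rule inj_onI) simp

lemma prod_reindex_W:
  assumes w: "w \<in> W"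
  shows "(\<Prod>v\<in>complex_of_real ` W - {complex_of_real w}. g v) = (\<Prod>v\<in>W-{w}. g (complex_of_real v))"
proof -
  have "complex_of_real ` W - {complex_of_real w} = complex_of_real ` (W - {w})" by auto
  then show ?thesis using inj_cr by (simp add: prod.reindex)
qed

lemma lagr_c:
  "poly Qp z = (\<Sum>w\<in>W. complex_of_real (c w) * (\<Prod>v\<in>W-{w}. z - complex_of_real v))"
proof -
  let ?Wc = "complex_of_real ` W"
  have fin: "finite ?Wc" using W_fin by simp
  have cw: "card ?Wc = n + 1" using card_W inj_cr by (simp add: card_image)
  have "poly Qp z = poly (\<Sum>w\<in>?Wc. smult (poly Qp w / (\<Prod>v\<in>?Wc-{w}. w - v)) (\<Prod>v\<in>?Wc-{w}. [:-v,1:])) z"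
    by (subst lagrange_interp[OF fin]) (auto simp: cw Qp_deg)
  also have "\<dots> = (\<Sum>w\<in>?Wc. poly Qp w / (\<Prod>v\<in>?Wc-{w}. w - v) * (\<Prod>v\<in>?Wc-{w}. z - v))"
    by (simp add: poly_sum poly_prod)
  also have "\<dots> = (\<Sum>w\<in>W. poly Qp (complex_of_real w) / (\<Prod>v\<in>?Wc-{complex_of_real w}. complex_of_real w - v)
        * (\<Prod>v\<in>?Wc-{complex_of_real w}. z - v))"
    using inj_cr by (simp add: sum.reindex)
  also have "\<dots> = (\<Sum>w\<in>W. complex_of_real (c w) * (\<Prod>v\<in>W-{w}. z - complex_of_real v))"
  proof (rule sum.cong[OF refl])
    fix w assume w: "w \<in> W"
    have "poly Qp (complex_of_real w) = complex_of_real (Qr w)"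
      unfolding poly_Qp Qr_def by simp
    moreover have "(\<Prod>v\<in>?Wc-{complex_of_real w}. complex_of_real w - v) = complex_of_real (\<Prod>v\<in>W-{w}. w - v)"
      by (subst prod_reindex_W[OF w]) simp
    moreover have "(\<Prod>v\<in>?Wc-{complex_of_real w}. z - v) = (\<Prod>v\<in>W-{w}. z - complex_of_real v)"
      by (rule prod_reindex_W[OF w])
    ultimately show "poly Qp (complex_of_real w) / (\<Prod>v\<in>?Wc-{complex_of_real w}. complex_of_real w - v)
        * (\<Prod>v\<in>?Wc-{complex_of_real w}. z - v) = complex_of_real (c w) * (\<Prod>v\<in>W-{w}. z - complex_of_real v)"
      unfolding c_def by simp
  qed
  finally show ?thesis .
qed

lemma sum_c: "(\<Sum>w\<in>W. c w) = 1"
proof -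
  let ?Wc = "complex_of_real ` W"
  have fin: "finite ?Wc" using W_fin by simp
  have cw: "card ?Wc = n + 1" using card_W inj_cr by (simp add: card_image)
  have "coeff Qp (card ?Wc - 1) = (\<Sum>w\<in>?Wc. poly Qp w / (\<Prod>v\<in>?Wc-{w}. w - v))"
    by (rule lagrange_coeff[OF fin]) (auto simp: cw Qp_deg)
  then have "1 = (\<Sum>w\<in>W. poly Qp (complex_of_real w) / (\<Prod>v\<in>?Wc-{complex_of_real w}. complex_of_real w - v))"
    using inj_cr cw Qp_deg by (simp add: sum.reindex)
  also have "\<dots> = (\<Sum>w\<in>W. complex_of_real (c w))"
  proof (rule sum.cong[OF refl])
    fix w assume w: "w \<in> W"
    have "poly Qp (complex_of_real w) = complex_of_real (Qr w)"
      unfolding poly_Qp Qr_def by simp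
    moreover have "(\<Prod>v\<in>?Wc-{complex_of_real w}. complex_of_real w - v) = complex_of_real (\<Prod>v\<in>W-{w}. w - v)"
      by (subst prod_reindex_W[OF w]) simp
    ultimately show "poly Qp (complex_of_real w) / (\<Prod>v\<in>?Wc-{complex_of_real w}. complex_of_real w - v) = complex_of_real (c w)"
      unfolding c_def by simp
  qed
  finally have "complex_of_real (\<Sum>w\<in>W. c w) = complex_of_real 1" by simp
  then show ?thesis using of_real_eq_iff by blast
qed

lemma partial_c:
  assumes z: "z \<notin> complex_of_real ` W"
  shows "poly Qp z / (\<Prod>v\<in>W. z - complex_of_real v) = (\<Sum>w\<in>W. complex_of_real (c w) / (z - complex_of_real w))"
proof -
  have Dnz: "(\<Prod>v\<in>W. z - complex_of_real v) \<noteq> 0" using z W_fin by auto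
  have "poly Qp z / (\<Prod>v\<in>W. z - complex_of_real v)
      = (\<Sum>w\<in>W. complex_of_real (c w) * (\<Prod>v\<in>W-{w}. z - complex_of_real v) / (\<Prod>v\<in>W. z - complex_of_real v))"
    unfolding lagr_c by (simp add: sum_divide_distrib)
  also have "\<dots> = (\<Sum>w\<in>W. complex_of_real (c w) / (z - complex_of_real w))"
  proof (rule sum.cong[OF refl])
    fix w assume w: "w \<in> W"
    have e: "(\<Prod>v\<in>W. z - complex_of_real v) = (z - complex_of_real w) * (\<Prod>v\<in>W-{w}. z - complex_of_real v)"
      using W_fin w by (simp add: prod.remove)
    have "(\<Prod>v\<in>W-{w}. z - complex_of_real v) \<noteq> 0" "z - complex_of_real w \<noteq> 0" using Dnz e by auto
    then show "complex_of_real (c w) * (\<Prod>v\<in>W-{w}. z - complex_of_real v) / (\<Prod>v\<in>W. z - complex_of_real v)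
        = complex_of_real (c w) / (z - complex_of_real w)"
      unfolding e by (simp add: field_simps)
  qed
  finally show ?thesis .
qed

lemma c_at_b:
  assumes i: "i \<in> {1..n}"
  shows "(\<Sum>w\<in>W. c w / (w - (1 - x i))) = 0"
proof -
  let ?z = "complex_of_real (1 - x i)"
  have z: "?z \<notin> complex_of_real ` W"
  proof
    assume "?z \<in> complex_of_real ` W"
    then obtain w where w: "w \<in> W" "?z = complex_of_real w" by blast
    then have "1 - x i = w" by (simp only: of_real_eq_iff)
    then show False using W_not_b[OF w(1) i] by simp
  qed
  have "poly Qp ?z = 0" unfolding poly_Qp using i by (intro prod_zero) auto
  then have "(\<Sum>w\<in>W. complex_of_real (c w) / (?z - complex_of_real w)) = 0"
    using partial_c[OF z] by simp
  moreover have "complex_of_real (\<Sum>w\<in>W. c w / ((1 - x i) - w)) = (\<Sum>w\<in>W. complex_of_real (c w) / (?z - complex_of_real w))"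
    by (simp only: of_real_sum of_real_divide of_real_diff)
  ultimately have "complex_of_real (\<Sum>w\<in>W. c w / ((1 - x i) - w)) = 0" by simp
  then have "(\<Sum>w\<in>W. c w / ((1 - x i) - w)) = 0" by (simp only: of_real_eq_0_iff)
  then have "- (\<Sum>w\<in>W. c w / ((1 - x i) - w)) = 0" by simp
  also have "- (\<Sum>w\<in>W. c w / ((1 - x i) - w)) = (\<Sum>w\<in>W. c w / (w - (1 - x i)))"
    unfolding sum_negf[symmetric] by (rule sum.cong[OF refl]) (metis minus_diff_eq divide_minus_right)
  finally show ?thesis .
qed

end

lemma monic_lin_prod_degree':
  fixes \<beta> :: "'b \<Rightarrow> 'a::field"
  assumes "finite J"
  shows "degree (\<Prod>j\<in>J. [:-\<beta> j,1:]) = card J" "coeff (\<Prod>j\<in>J. [:-\<beta> j,1:]) (card J) = 1"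
proof -
  have d: "degree (\<Prod>j\<in>J. [:-\<beta> j,1:]) = card J"
    by (subst degree_prod_eq_sum_degree) auto
  show "degree (\<Prod>j\<in>J. [:-\<beta> j,1:]) = card J" by (rule d)
  have "lead_coeff (\<Prod>j\<in>J. [:-\<beta> j,1:]) = 1" by (simp add: lead_coeff_prod)
  thus "coeff (\<Prod>j\<in>J. [:-\<beta> j,1:]) (card J) = 1" using d by simp
qed

context cor
begin

definition Pp :: "complex poly" where
  "Pp = (\<Sum>i=1..n. smult (complex_of_real (a i)) (\<Prod>j\<in>{1..n}-{i}. [:- complex_of_real (1 - x j), 1:]))"

definition Yp :: "complex poly" where
  "Yp = (\<Prod>v\<in>Y. [:- complex_of_real v, 1:])"

lemma poly_Pp: "poly Pp z = (\<Sum>i=1..n. complex_of_real (a i) * (\<Prod>j\<in>{1..n}-{i}. z - complex_of_real (1 - x j)))"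
  unfolding Pp_def by (simp add: poly_sum poly_prod algebra_simps)

lemma Pp_eq_Yp: "Pp = Yp"
proof (rule poly_eqI_degree_lead_coeff[where n = "n - 1" and A = "complex_of_real ` Y"])
  have cardJ: "card ({1..n}-{i}) = n - 1" if "i \<in> {1..n}" for i using that by simp
  have "coeff Pp (n - 1) = (\<Sum>i=1..n. complex_of_real (a i) * coeff (\<Prod>j\<in>{1..n}-{i}. [:- complex_of_real (1 - x j), 1:]) (n - 1))"
    unfolding Pp_def by (simp add: coeff_sum)
  also have "\<dots> = (\<Sum>i=1..n. complex_of_real (a i))"
  proof (rule sum.cong[OF refl])
    fix i assume i: "i \<in> {1..n}"
    have "coeff (\<Prod>j\<in>{1..n}-{i}. [:- complex_of_real (1 - x j), 1:]) (card ({1..n}-{i})) = 1"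
      by (rule monic_lin_prod_degree'(2)) simp
    then show "complex_of_real (a i) * coeff (\<Prod>j\<in>{1..n}-{i}. [:- complex_of_real (1 - x j), 1:]) (n - 1) = complex_of_real (a i)"
      unfolding cardJ[OF i] by simp
  qed
  also have "\<dots> = 1" using a_sum by (simp flip: of_real_sum)
  finally have cP: "coeff Pp (n - 1) = 1" .
  have cY: "coeff Yp (n - 1) = 1" unfolding Yp_def using monic_lin_prod_degree'(2)[OF Y_fin, of complex_of_real] card_Y by simp
  show "coeff Pp (n - 1) = coeff Yp (n - 1)" using cP cY by simp
  show "n - 1 \<le> card (complex_of_real ` Y)" using card_Y inj_cr by (simp add: card_image)
  show "degree Pp \<le> n - 1" unfolding Pp_def
  proof (rule degree_sum_le[THEN order.trans])
    fix i assume i: "i \<in> {1..n}"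
    show "degree (smult (complex_of_real (a i)) (\<Prod>j\<in>{1..n}-{i}. [:- complex_of_real (1 - x j), 1:])) \<le> n - 1"
      using degree_smult_le[THEN order.trans] monic_lin_prod_degree'(1)[of "{1..n}-{i}" "\<lambda>j. complex_of_real (1 - x j)"] cardJ[OF i]
      by (metis finite_Diff finite_atLeastAtMost order_refl)
  qed auto
  show "degree Yp \<le> n - 1" unfolding Yp_def using monic_lin_prod_degree'(1)[OF Y_fin, of complex_of_real] card_Y by simp
  fix z assume "z \<in> complex_of_real ` Y"
  then obtain i where i: "i \<in> {1..n-1}" and z: "z = complex_of_real (y i)" unfolding Y_def by auto
  have yY: "y i \<in> Y" using i unfolding Y_def by auto
  have "poly Yp z = 0" unfolding Yp_def z using yY Y_fin by (simp add: poly_prod prod_zero_iff)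
  moreover have "poly Pp z = 0"
  proof -
    have nb: "\<And>j. j \<in> {1..n} \<Longrightarrow> y i \<noteq> 1 - x j" using y_not_b[OF i] by simp
    have "(\<Sum>i'=1..n. a i' * (\<Prod>j\<in>{1..n}-{i'}. y i - (1 - x j))) = f (y i) * Qr (y i)"
      unfolding f_def Qr_def by (rule pf_mult[symmetric]) (use nb in auto)
    also have "\<dots> = 0" using y_prop[OF i] by simp
    finally have "complex_of_real (\<Sum>i'=1..n. a i' * (\<Prod>j\<in>{1..n}-{i'}. y i - (1 - x j))) = 0" by simp
    then show ?thesis unfolding poly_Pp z by (simp only: of_real_sum of_real_mult of_real_prod of_real_diff of_real_1)
  qed
  ultimately show "poly Pp z = poly Yp z" by simp
qed

lemma Pfun: "(\<Sum>i=1..n. complex_of_real (a i) * (\<Prod>j\<in>{1..n}-{i}. z - complex_of_real (1 - x j))) = (\<Prod>v\<in>Y. z - complex_of_real v)"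
proof -
  have "poly Pp z = poly Yp z" using Pp_eq_Yp by simp
  then show ?thesis unfolding poly_Pp Yp_def by (simp add: poly_prod)
qed

lemma Pfun_real: "(\<Sum>i=1..n. a i * (\<Prod>j\<in>{1..n}-{i}. t - (1 - x j))) = (\<Prod>v\<in>Y. t - v)"
proof -
  have "complex_of_real (\<Sum>i=1..n. a i * (\<Prod>j\<in>{1..n}-{i}. t - (1 - x j))) = complex_of_real (\<Prod>v\<in>Y. t - v)"
    using Pfun[of "complex_of_real t"] by (simp only: of_real_sum of_real_mult of_real_prod of_real_diff of_real_1)
  then show ?thesis by (simp only: of_real_eq_iff)
qed

definition s :: "complex \<Rightarrow> complex" where
  "s z = (\<Sum>w\<in>W. complex_of_real (c w) / (complex_of_real w - z))"

lemma zero_notin_Y: "0 \<notin> Y" and one_notin_Y: "1 \<notin> Y" using Y_01 by force+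

lemma D_split: "(\<Prod>v\<in>W. z - complex_of_real v) = z * ((z - 1) * (\<Prod>v\<in>Y. z - complex_of_real v))"
  unfolding W_def using Y_fin zero_notin_Y one_notin_Y by simp

lemma s_formula:
  assumes z: "Im z \<noteq> 0"
  shows "s z = 1 / (z * (1 - z) * (\<Sum>i=1..n. complex_of_real (a i) / (z - complex_of_real (1 - x i))))"
proof -
  have zW: "z \<notin> complex_of_real ` W" using z by auto
  have nb: "\<And>j. z \<noteq> complex_of_real (1 - x j)" using z by auto
  have s1: "s z = - (poly Qp z / (\<Prod>v\<in>W. z - complex_of_real v))"
  proof -
    have "s z = - (\<Sum>w\<in>W. complex_of_real (c w) / (z - complex_of_real w))"
      unfolding s_def sum_negf[symmetric] by (rule sum.cong[OF refl]) (metis minus_diff_eq divide_minus_right)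
    then show ?thesis using partial_c[OF zW] by simp
  qed
  define Qz where "Qz = poly Qp z"
  define Pz where "Pz = (\<Prod>v\<in>Y. z - complex_of_real v)"
  define F where "F = (\<Sum>i=1..n. complex_of_real (a i) / (z - complex_of_real (1 - x i)))"
  have FQ: "F * Qz = Pz"
    unfolding F_def Qz_def Pz_def poly_Qp Pfun[symmetric] by (rule pf_mult) (use nb in auto)
  have Qnz: "Qz \<noteq> 0" unfolding Qz_def poly_Qp using nb by auto
  have Pnz: "Pz \<noteq> 0" unfolding Pz_def using z Y_fin by auto
  have z0: "z \<noteq> 0" "z \<noteq> 1" "1 - z \<noteq> 0" "z - 1 \<noteq> 0" using z by auto
  have Feq: "F = Pz / Qz" using FQ Qnz by (simp add: field_simps)
  have "s z = - (Qz / (z * ((z - 1) * Pz)))" unfolding s1 D_split Qz_def Pz_def by simp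
  also have "\<dots> = 1 / (z * (1 - z) * F)" unfolding Feq using Qnz Pnz z0 by (simp add: field_simps)
  finally show ?thesis unfolding F_def .
qed

lemma c_one: "c 1 = 1 / (\<Sum>i=1..n. a i / x i)"
proof -
  have W1: "W - {1} = insert 0 Y" unfolding W_def using one_notin_Y by auto
  have pr: "(\<Prod>v\<in>W-{1}. 1 - v) = (\<Prod>v\<in>Y. 1 - v)" unfolding W1 using Y_fin zero_notin_Y by simp
  have nb: "\<And>j. j \<in> {1..n} \<Longrightarrow> (1::real) \<noteq> 1 - x j" using x_01 by fastforce
  have "(\<Prod>v\<in>Y. 1 - v) = f 1 * Qr 1"
    unfolding Pfun_real[symmetric] f_def Qr_def by (rule pf_mult[symmetric]) (use nb in auto)
  moreover have "Qr 1 \<noteq> 0"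
  proof -
    have "\<forall>j\<in>{1..n}. 1 - (1 - x j) \<noteq> (0::real)" using x_01 by fastforce
    then show ?thesis unfolding Qr_def by simp
  qed
  moreover have "f 1 = (\<Sum>i=1..n. a i / x i)" unfolding f_def by simp
  ultimately show ?thesis unfolding c_def pr by simp
qed

lemma S_eq:
  assumes nb: "\<And>j. j \<in> {1..n} \<Longrightarrow> w \<noteq> 1 - x j"
  shows "(\<Sum>i=1..n. a i * x i / (w - (1 - x i))) = 1 + (1 - w) * f w"
proof -
  have "(\<Sum>i=1..n. a i * x i / (w - (1 - x i))) = (\<Sum>i=1..n. a i + (1 - w) * (a i / (w - (1 - x i))))"
  proof (rule sum.cong[OF refl])
    fix i assume "i \<in> {1..n}"
    then have "w - (1 - x i) \<noteq> 0" using nb by auto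
    then show "a i * x i / (w - (1 - x i)) = a i + (1 - w) * (a i / (w - (1 - x i)))"
      by (simp add: field_simps)
  qed
  also have "\<dots> = 1 + (1 - w) * f w"
    unfolding sum.distrib f_def sum_distrib_left[symmetric] a_sum ..
  finally show ?thesis .
qed

lemma S_W: assumes w: "w \<in> W" "w \<noteq> 0" shows "(\<Sum>i=1..n. a i * x i / (w - (1 - x i))) = 1"
proof -
  have "(1 - w) * f w = 0"
  proof (cases "w = 1")
    case False
    then have "w \<in> Y" using w unfolding W_def by auto
    then obtain i where "i \<in> {1..n-1}" "w = y i" unfolding Y_def by auto
    then show ?thesis using y_prop by simp
  qed simp
  then show ?thesis using S_eq W_not_b[OF w(1)] by simp
qed

lemma residue:
  assumes w0: "w0 \<in> W" and h: "\<And>z. Im z > 0 \<Longrightarrow> h z = s z"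
  shows "((\<lambda>z. (complex_of_real w0 - z) * h z) \<longlongrightarrow> complex_of_real (c w0))
           (at (complex_of_real w0) within {z. Im z > 0})"
proof -
  define G where "G z = complex_of_real (c w0) + (\<Sum>w\<in>W-{w0}. complex_of_real (c w) * (complex_of_real w0 - z) / (complex_of_real w - z))" for z
  have lim: "((\<lambda>z. \<Sum>w\<in>W-{w0}. complex_of_real (c w) * (complex_of_real w0 - z) / (complex_of_real w - z))
      \<longlongrightarrow> (\<Sum>w\<in>W-{w0}. complex_of_real (c w) * (complex_of_real w0 - complex_of_real w0) / (complex_of_real w - complex_of_real w0)))
      (at (complex_of_real w0) within {z. Im z > 0})"
    by (intro tendsto_intros) auto
  then have "((\<lambda>z. \<Sum>w\<in>W-{w0}. complex_of_real (c w) * (complex_of_real w0 - z) / (complex_of_real w - z)) \<longlongrightarrow> 0)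
      (at (complex_of_real w0) within {z. Im z > 0})" by simp
  then have "(G \<longlongrightarrow> complex_of_real (c w0) + 0) (at (complex_of_real w0) within {z. Im z > 0})"
    unfolding G_def by (intro tendsto_add tendsto_const)
  then have G: "(G \<longlongrightarrow> complex_of_real (c w0)) (at (complex_of_real w0) within {z. Im z > 0})" by simp
  have ev: "eventually (\<lambda>z. G z = (complex_of_real w0 - z) * h z) (at (complex_of_real w0) within {z. Im z > 0})"
    unfolding eventually_at_filter
  proof (rule always_eventually, intro allI impI)
    fix z assume z0: "z \<noteq> complex_of_real w0" and zS: "z \<in> {z. Im z > 0}"
    then have hz: "h z = s z" using h by simp
    have nz: "\<And>w. complex_of_real w - z \<noteq> 0" using zS by auto
    have "(complex_of_real w0 - z) * s z = (\<Sum>w\<in>W. complex_of_real (c w) * (complex_of_real w0 - z) / (complex_of_real w - z))"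
      unfolding s_def sum_distrib_left by (rule sum.cong[OF refl]) (simp add: field_simps)
    also have "\<dots> = complex_of_real (c w0) * (complex_of_real w0 - z) / (complex_of_real w0 - z)
        + (\<Sum>w\<in>W-{w0}. complex_of_real (c w) * (complex_of_real w0 - z) / (complex_of_real w - z))"
      using W_fin w0 by (simp add: sum.remove)
    also have "\<dots> = G z" unfolding G_def using nz[of w0] by simp
    finally show "G z = (complex_of_real w0 - z) * h z" using hz by simp
  qed
  show ?thesis using tendsto_cong[OF ev] G by simp
qed

end

lemma conv_pow_vanish: "K 0 = 0 \<Longrightarrow> N < m \<Longrightarrow> conv_pow K m N = 0"
proof (induction m arbitrary: N)
  case 0 then show ?case by simp
next
  case (Suc m)
  have "K k * conv_pow K m (N - k) = 0" if "k \<le> N" for k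
  proof (cases "k = 0")
    case True then show ?thesis using Suc by simp
  next
    case False then have "N - k < m" using Suc that by linarith
    then show ?thesis using Suc by simp
  qed
  then show ?case by (auto intro!: sum.neutral)
qed

lemma renewal_finite: "K 0 = 0 \<Longrightarrow> renewal_prob K N = (\<Sum>m\<le>N. conv_pow K m N)"
  unfolding renewal_prob_def by (rule suminf_finite) (auto intro: conv_pow_vanish)

lemma renewal_rec:
  assumes K0: "K 0 = 0" and N: "N \<ge> 1"
  shows "renewal_prob K N = (\<Sum>k\<le>N. K k * renewal_prob K (N - k))"
proof -
  have "renewal_prob K N = (\<Sum>m\<le>N. conv_pow K m N)" by (rule renewal_finite[where K=K, OF K0])
  also have "\<dots> = conv_pow K 0 N + (\<Sum>m<N. conv_pow K (Suc m) N)" by (rule sum.atMost_shift)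
  also have "\<dots> = (\<Sum>m<N. \<Sum>k\<le>N. K k * conv_pow K m (N - k))" using N by simp
  also have "\<dots> = (\<Sum>k\<le>N. \<Sum>m<N. K k * conv_pow K m (N - k))" by (rule sum.swap)
  also have "\<dots> = (\<Sum>k\<le>N. K k * renewal_prob K (N - k))"
  proof (rule sum.cong[OF refl])
    fix k assume k: "k \<in> {..N}"
    show "(\<Sum>m<N. K k * conv_pow K m (N - k)) = K k * renewal_prob K (N - k)"
    proof (cases "k = 0")
      case True then show ?thesis using K0 by simp
    next
      case False
      have "(\<Sum>m<N. conv_pow K m (N - k)) = (\<Sum>m\<le>N-k. conv_pow K m (N - k))"
        by (rule sum.mono_neutral_right) (use False k in \<open>auto intro: conv_pow_vanish[where K=K, OF K0]\<close>)
      then show ?thesis unfolding renewal_finite[where K=K, OF K0, of "N - k"] sum_distrib_left[symmetric] by simp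
    qed
  qed
  finally show ?thesis .
qed

lemma renewal_unique:
  assumes K0: "K 0 = 0" and v0: "v 0 = 1" and vrec: "\<And>N. N \<ge> 1 \<Longrightarrow> v N = (\<Sum>k\<le>N. K k * v (N - k))"
  shows "renewal_prob K N = v N"
proof (induction N rule: less_induct)
  case (less N)
  show ?case
  proof (cases "N = 0")
    case True then show ?thesis using v0 renewal_finite[where K=K, OF K0, of 0] by simp
  next
    case False
    then have N: "N \<ge> 1" by simp
    have "renewal_prob K N = (\<Sum>k\<le>N. K k * renewal_prob K (N - k))" by (rule renewal_rec[where K=K, OF K0 N])
    also have "\<dots> = (\<Sum>k\<le>N. K k * v (N - k))"
    proof (rule sum.cong[OF refl])
      fix k assume "k \<in> {..N}"
      show "K k * renewal_prob K (N - k) = K k * v (N - k)"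
      proof (cases "k = 0")
        case True then show ?thesis using K0 by simp
      next
        case False then show ?thesis using less N by simp
      qed
    qed
    also have "\<dots> = v N" using vrec[OF N] by simp
    finally show ?thesis .
  qed
qed

context cor
begin

definition v :: "nat \<Rightarrow> real" where "v N = (\<Sum>w\<in>W. c w * w ^ N)"

lemma v0: "v 0 = 1" unfolding v_def using sum_c by simp

lemma v_rec:
  assumes N: "N \<ge> 1"
  shows "v N = (\<Sum>k\<le>N. Kdisc n a x k * v (N - k))"
proof -
  let ?K = "Kdisc n a x"
  have "(\<Sum>k\<le>N. ?K k * v (N - k)) = (\<Sum>k\<in>insert 0 {1..N}. ?K k * v (N - k))"
    by (rule sum.cong) auto
  also have "\<dots> = (\<Sum>k\<in>{1..N}. ?K k * v (N - k))" by (simp add: Kdisc_def)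
  also have "\<dots> = (\<Sum>k\<in>{1..N}. \<Sum>i=1..n. \<Sum>w\<in>W. c w * (a i * x i) * ((1 - x i) ^ (k - 1) * w ^ (N - k)))"
  proof (rule sum.cong[OF refl])
    fix k assume k: "k \<in> {1..N}"
    have "?K k * v (N - k) = (\<Sum>i=1..n. a i * (1 - x i) ^ (k - 1) * x i) * (\<Sum>w\<in>W. c w * w ^ (N - k))"
      unfolding Kdisc_def v_def using k by simp
    also have "\<dots> = (\<Sum>i=1..n. \<Sum>w\<in>W. (a i * (1 - x i) ^ (k - 1) * x i) * (c w * w ^ (N - k)))"
      by (rule sum_product)
    also have "\<dots> = (\<Sum>i=1..n. \<Sum>w\<in>W. c w * (a i * x i) * ((1 - x i) ^ (k - 1) * w ^ (N - k)))"
      by (simp add: algebra_simps)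
    finally show "?K k * v (N - k) = (\<Sum>i=1..n. \<Sum>w\<in>W. c w * (a i * x i) * ((1 - x i) ^ (k - 1) * w ^ (N - k)))" .
  qed
  also have "\<dots> = (\<Sum>i=1..n. \<Sum>k\<in>{1..N}. \<Sum>w\<in>W. c w * (a i * x i) * ((1 - x i) ^ (k - 1) * w ^ (N - k)))"
    by (rule sum.swap)
  also have "\<dots> = (\<Sum>i=1..n. \<Sum>w\<in>W. \<Sum>k\<in>{1..N}. c w * (a i * x i) * ((1 - x i) ^ (k - 1) * w ^ (N - k)))"
    by (rule sum.cong[OF refl], rule sum.swap)
  also have "\<dots> = (\<Sum>i=1..n. \<Sum>w\<in>W. c w * (a i * x i) * ((w ^ N - (1 - x i) ^ N) / (w - (1 - x i))))"
  proof (intro sum.cong[OF refl])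
    fix i w assume i: "i \<in> {1..n}" and w: "w \<in> W"
    have ne: "w - (1 - x i) \<noteq> 0" using W_not_b[OF w i] by simp
    have "(\<Sum>k\<in>{1..N}. (1 - x i) ^ (k - 1) * w ^ (N - k)) = (w ^ N - (1 - x i) ^ N) / (w - (1 - x i))"
      using geo_sum[of w "1 - x i" N] ne by (simp add: field_simps)
    then show "(\<Sum>k\<in>{1..N}. c w * (a i * x i) * ((1 - x i) ^ (k - 1) * w ^ (N - k)))
        = c w * (a i * x i) * ((w ^ N - (1 - x i) ^ N) / (w - (1 - x i)))"
      by (simp add: sum_distrib_left[symmetric])
  qed
  also have "\<dots> = (\<Sum>i=1..n. \<Sum>w\<in>W. c w * w ^ N * (a i * x i / (w - (1 - x i))) - (a i * x i * (1 - x i) ^ N) * (c w / (w - (1 - x i))))"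
    by (intro sum.cong[OF refl]) (simp add: field_simps diff_divide_distrib)
  also have "\<dots> = (\<Sum>w\<in>W. c w * w ^ N * (\<Sum>i=1..n. a i * x i / (w - (1 - x i))))
       - (\<Sum>i=1..n. (a i * x i * (1 - x i) ^ N) * (\<Sum>w\<in>W. c w / (w - (1 - x i))))"
  proof -
    have A: "(\<Sum>i=1..n. \<Sum>w\<in>W. c w * w ^ N * (a i * x i / (w - (1 - x i))))
        = (\<Sum>w\<in>W. c w * w ^ N * (\<Sum>i=1..n. a i * x i / (w - (1 - x i))))"
      by (subst sum.swap) (simp add: sum_distrib_left)
    have B: "(\<Sum>i=1..n. \<Sum>w\<in>W. (a i * x i * (1 - x i) ^ N) * (c w / (w - (1 - x i))))
        = (\<Sum>i=1..n. (a i * x i * (1 - x i) ^ N) * (\<Sum>w\<in>W. c w / (w - (1 - x i))))"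
      by (simp add: sum_distrib_left)
    show ?thesis unfolding sum_subtractf A B ..
  qed
  also have "(\<Sum>i=1..n. (a i * x i * (1 - x i) ^ N) * (\<Sum>w\<in>W. c w / (w - (1 - x i)))) = 0"
    using c_at_b by simp
  also have "(\<Sum>w\<in>W. c w * w ^ N * (\<Sum>i=1..n. a i * x i / (w - (1 - x i)))) = v N"
    unfolding v_def
  proof (rule sum.cong[OF refl])
    fix w assume w: "w \<in> W"
    show "c w * w ^ N * (\<Sum>i=1..n. a i * x i / (w - (1 - x i))) = c w * w ^ N"
    proof (cases "w = 0")
      case True then show ?thesis using N by simp
    next
      case False then show ?thesis using S_W[OF w] by simp
    qed
  qed
  finally show ?thesis by simp
qed

lemma renewal_v: "renewal_prob (Kdisc n a x) N = v N"
  by (rule renewal_unique) (auto simp: Kdisc_def v0 v_rec)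

lemma mean_K_val: "mean_K (Kdisc n a x) = (\<Sum>i=1..n. a i / x i)"
proof -
  have s1: "(\<lambda>m. real (Suc m) * Kdisc n a x (Suc m)) sums (\<Sum>i=1..n. a i / x i)"
  proof -
    have "(\<lambda>m. \<Sum>i=1..n. a i * x i * (of_nat (Suc m) * (1 - x i) ^ m)) sums (\<Sum>i=1..n. a i * x i * (1 / (1 - (1 - x i)) ^ 2))"
    proof (rule sums_sum)
      fix i assume i: "i \<in> {1..n}"
      have "norm (1 - x i) < 1" using x_01[of i] i by auto
      then show "(\<lambda>m. a i * x i * (of_nat (Suc m) * (1 - x i) ^ m)) sums (a i * x i * (1 / (1 - (1 - x i)) ^ 2))"
        by (intro sums_mult geometric_deriv_sums)
    qed
    moreover have "(\<Sum>i=1..n. a i * x i * (1 / (1 - (1 - x i)) ^ 2)) = (\<Sum>i=1..n. a i / x i)"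
    proof (rule sum.cong[OF refl])
      fix i assume i: "i \<in> {1..n}"
      then have "x i \<noteq> 0" using x_01[of i] by auto
      then show "a i * x i * (1 / (1 - (1 - x i)) ^ 2) = a i / x i" by (simp add: power2_eq_square field_simps)
    qed
    moreover have "(\<lambda>m. \<Sum>i=1..n. a i * x i * (of_nat (Suc m) * (1 - x i) ^ m)) = (\<lambda>m. real (Suc m) * Kdisc n a x (Suc m))"
      by (rule ext) (simp add: Kdisc_def sum_distrib_left algebra_simps)
    ultimately show ?thesis by simp
  qed
  have "(\<lambda>m. real m * Kdisc n a x m) sums ((\<Sum>i=1..n. a i / x i) + real 0 * Kdisc n a x 0)"
    using s1 by (subst (asm) sums_Suc_iff)
  then have "(\<lambda>m. real m * Kdisc n a x m) sums (\<Sum>i=1..n. a i / x i)" by simp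
  then show ?thesis unfolding mean_K_def by (rule sums_unique[symmetric])
qed

end

lemma pw_conv:
  fixes s t :: real
  assumes "0 \<le> t" "t \<le> 1" "0 \<le> s" "s \<le> 1"
  shows "(\<lambda>k. (1 - (s - t)^2 / 2) ^ k) \<longlonglongrightarrow> indicator {t} s"
proof (cases "s = t")
  case True then show ?thesis by simp
next
  case False
  have "(s - t)^2 \<le> 1" using assms by (simp add: abs_square_le_1)
  moreover have "(s - t)^2 > 0" using False by simp
  ultimately have "norm (1 - (s - t)^2 / 2) < 1" by simp
  then have "(\<lambda>k. (1 - (s - t)^2 / 2) ^ k) \<longlonglongrightarrow> 0" by (rule LIMSEQ_power_zero)
  then show ?thesis using False by simp
qed

locale cor_nu = cor +
  fixes \<nu> :: "real measure"
  assumes nu_prob: "prob_space \<nu>" and nu_borel: "sets \<nu> = sets borel"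
    and nu_supp: "measure \<nu> {0..1} = 1"
    and nu_moments: "\<And>N::nat. renewal_prob (Kdisc n a x) N = (\<integral>t. t ^ N \<partial>\<nu>)"
begin

interpretation P: prob_space \<nu> by (rule nu_prob)

lemma space_nu: "space \<nu> = UNIV"
  using sets_eq_imp_space_eq[OF nu_borel] by simp

lemma meas_nu: "measurable \<nu> M = measurable borel M"
  by (rule measurable_cong_sets[OF nu_borel refl])

lemma sets_nu: "A \<in> sets borel \<Longrightarrow> A \<in> sets \<nu>" using nu_borel by simp

lemma AE01: "AE t in \<nu>. t \<in> {0..1}"
  using P.AE_in_set_eq_1[of "{0..1}"] nu_supp sets_nu by simp

lemma int_pow: "integrable \<nu> (\<lambda>t. t ^ j)"
proof (rule P.integrable_const_bound[where B = 1])
  show "AE t in \<nu>. norm (t ^ j) \<le> 1" using AE01 by eventually_elim (auto intro: power_le_one)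
  show "(\<lambda>t. t ^ j) \<in> borel_measurable \<nu>" unfolding meas_nu by measurable
qed

lemma int_poly: "(\<integral>t. poly p t \<partial>\<nu>) = (\<Sum>w\<in>W. c w * poly p w)"
proof -
  have "(\<integral>t. poly p t \<partial>\<nu>) = (\<integral>t. (\<Sum>j\<le>degree p. coeff p j * t ^ j) \<partial>\<nu>)"
    by (simp only: poly_altdef)
  also have "\<dots> = (\<Sum>j\<le>degree p. \<integral>t. coeff p j * t ^ j \<partial>\<nu>)"
    by (subst Bochner_Integration.integral_sum) (auto simp: int_pow)
  also have "\<dots> = (\<Sum>j\<le>degree p. coeff p j * v j)"
    by (rule sum.cong[OF refl]) (simp add: renewal_v[symmetric] nu_moments)
  also have "\<dots> = (\<Sum>w\<in>W. c w * poly p w)"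
    unfolding v_def poly_altdef sum_distrib_left
    by (subst sum.swap) (simp add: algebra_simps)
  finally show ?thesis .
qed

lemma atom: fixes t :: real shows "measure \<nu> {t} = (if t \<in> W then c t else 0)"
proof (cases "0 \<le> t \<and> t \<le> 1")
  case True
  define r where "r k s = (1 - (s - t)^2 / 2) ^ k" for k s
  define pk where "pk k = [:1 - t^2/2, t, -1/2:] ^ k" for k
  have b: "poly [:1 - t^2/2, t, -1/2:] s = 1 - (s - t)^2/2" for s
    by (simp add: power2_eq_square field_simps)
  have poly_pk: "poly (pk k) s = r k s" for k s
    unfolding pk_def r_def poly_power b ..
  have lim1: "(\<lambda>k. \<integral>s. r k s \<partial>\<nu>) \<longlonglongrightarrow> (\<integral>s. indicator {t} s \<partial>\<nu>)"
  proof (rule integral_dominated_convergence[where w = "\<lambda>_. 1"])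
    show "indicator {t} \<in> borel_measurable \<nu>" unfolding meas_nu by measurable
    show "\<And>k. r k \<in> borel_measurable \<nu>" unfolding meas_nu r_def by measurable
    show "integrable \<nu> (\<lambda>_. 1::real)" by simp
    show "AE s in \<nu>. (\<lambda>k. r k s) \<longlonglongrightarrow> indicator {t} s"
      using AE01 by eventually_elim (use True in \<open>auto simp: r_def intro!: pw_conv\<close>)
    fix k show "AE s in \<nu>. norm (r k s) \<le> 1"
      using AE01
    proof eventually_elim
      fix s :: real assume s: "s \<in> {0..1}"
      have "(s - t)^2 \<le> 1" using s True by (auto simp: abs_square_le_1 abs_le_iff)
      then have "\<bar>1 - (s - t)^2 / 2\<bar> \<le> 1" by simp
      then have "\<bar>1 - (s - t)^2 / 2\<bar> ^ k \<le> 1" by (rule power_le_one[OF abs_ge_zero])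
      then show "norm (r k s) \<le> 1" unfolding r_def by (simp add: power_abs)
    qed
  qed
  have lim2: "(\<lambda>k. \<Sum>w\<in>W. c w * r k w) \<longlonglongrightarrow> (\<Sum>w\<in>W. c w * indicator {t} w)"
    unfolding r_def using W_01 True by (intro tendsto_intros pw_conv) auto
  have eq: "(\<integral>s. r k s \<partial>\<nu>) = (\<Sum>w\<in>W. c w * r k w)" for k
    using int_poly[of "pk k"] unfolding poly_pk .
  have "(\<integral>s. indicator {t} s \<partial>\<nu>) = (\<Sum>w\<in>W. c w * indicator {t} w)"
    using LIMSEQ_unique[OF lim1 lim2[folded eq]] .
  also have "\<dots> = (\<Sum>w\<in>W. if w = t then c w else 0)" by (rule sum.cong) (auto simp: indicator_def)
  also have "\<dots> = (if t \<in> W then c t else 0)" using W_fin by simp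
  finally show ?thesis by (simp add: space_nu)
next
  case False
  then have tW: "t \<notin> W" using W_01 by auto
  have "measure \<nu> {t} \<le> measure \<nu> (space \<nu> - {0..1})"
    using False sets_nu by (intro P.finite_measure_mono) (auto simp: space_nu)
  also have "\<dots> = 0" using P.prob_compl[of "{0..1}"] sets_nu nu_supp by simp
  finally show ?thesis using tW by (simp add: measure_nonneg antisym)
qed

lemma W_meas: "measure \<nu> W = 1"
proof -
  have "measure \<nu> W = (\<Sum>w\<in>W. measure \<nu> {w})"
    by (rule measure_eq_sum_singleton) (auto simp: W_fin sets_nu)
  also have "\<dots> = (\<Sum>w\<in>W. c w)" by (rule sum.cong) (auto simp: atom)
  finally show ?thesis using sum_c by simp
qed

lemma atoms: "{t. measure \<nu> {t} > 0} = W"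
proof -
  have "c w > 0" if "w \<in> W" for w
    using atom[of w] that c_nz[OF that] measure_nonneg[of \<nu> "{w}"] by simp
  then show ?thesis by (auto simp: atom split: if_splits)
qed

lemma AE_W: "AE t in \<nu>. t \<in> W"
  using P.AE_in_set_eq_1[of W] W_meas sets_nu W_fin by (simp add: finite_imp_closed)

lemma integral_W:
  fixes g :: "real \<Rightarrow> complex"
  assumes g: "g \<in> borel_measurable borel"
  shows "(\<integral>t. g t \<partial>\<nu>) = (\<Sum>w\<in>W. complex_of_real (c w) * g w)"
proof -
  have "(\<integral>t. g t \<partial>\<nu>) = (\<integral>t. (\<Sum>w\<in>W. indicator {w} t *\<^sub>R g w) \<partial>\<nu>)"
  proof (rule integral_cong_AE)
    show "g \<in> borel_measurable \<nu>" using g unfolding meas_nu .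
    show "(\<lambda>t. \<Sum>w\<in>W. indicator {w} t *\<^sub>R g w) \<in> borel_measurable \<nu>" unfolding meas_nu by measurable
    show "AE t in \<nu>. g t = (\<Sum>w\<in>W. indicator {w} t *\<^sub>R g w)"
      using AE_W
    proof eventually_elim
      fix t assume t: "t \<in> W"
      have "(\<Sum>w\<in>W. indicator {w} t *\<^sub>R g w) = (\<Sum>w\<in>W. if w = t then g w else 0)"
        by (rule sum.cong) (auto simp: indicator_def)
      also have "\<dots> = g t" using t W_fin by simp
      finally show "g t = (\<Sum>w\<in>W. indicator {w} t *\<^sub>R g w)" by simp
    qed
  qed
  also have "\<dots> = (\<Sum>w\<in>W. \<integral>t. indicator {w} t *\<^sub>R g w \<partial>\<nu>)"
  proof (rule Bochner_Integration.integral_sum[where f="\<lambda>w t. indicator {w} t *\<^sub>R g w"])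
    fix w
    have "integrable \<nu> (indicator {w} :: real \<Rightarrow> real)"
      by (rule integrable_real_indicator) (auto simp: sets_nu P.emeasure_finite less_top[symmetric])
    then show "integrable \<nu> (\<lambda>t. indicator {w} t *\<^sub>R g w)" by (rule integrable_scaleR_left)
  qed
  also have "\<dots> = (\<Sum>w\<in>W. complex_of_real (c w) * g w)"
    by (rule sum.cong[OF refl]) (auto simp: sets_nu space_nu atom scaleR_conv_of_real)
  finally show ?thesis .
qed

lemma stieltjes_eq: "stieltjes \<nu> z = s z" if "Im z > 0"
proof -
  have "stieltjes \<nu> z = (\<Sum>w\<in>W. complex_of_real (c w) * (1 / (complex_of_real w - z)))"
    unfolding stieltjes_def by (rule integral_W) measurable
  then show ?thesis unfolding s_def by simp
qed

end

theorem corollary1: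
  fixes n :: nat and x a :: "nat \<Rightarrow> real" and \<nu> :: "real measure"
  assumes n_pos: "n \<ge> 1"
    and x_pos: "0 < x 1" and x_mono: "\<And>i. 1 \<le> i \<Longrightarrow> i < n \<Longrightarrow> x i < x (Suc i)" and x_lt1: "x n < 1"
    and a_pos: "\<And>i. 1 \<le> i \<Longrightarrow> i \<le> n \<Longrightarrow> a i > 0"
    and a_sum: "(\<Sum>i=1..n. a i) = 1"
    and nu_prob: "prob_space \<nu>" and nu_borel: "sets \<nu> = sets borel"
    and nu_supp: "measure \<nu> {0..1} = 1"
    and nu_moments: "\<And>N::nat. renewal_prob (Kdisc n a x) N = (\<integral>t. t ^ N \<partial>\<nu>)"
  shows
    "(\<forall>z. Im z > 0 \<longrightarrow>
        stieltjes \<nu> z = 1 / (z * (1 - z) * (\<Sum>i=1..n. complex_of_real (a i) / (z - complex_of_real (1 - x i)))))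
     \<and> (\<exists>y :: nat \<Rightarrow> real.
          (\<forall>i\<in>{1..n-1}. 1 - x (n - i + 1) < y i \<and> y i < 1 - x (n - i)
              \<and> (\<forall>t. 1 - x (n - i + 1) < t \<and> t < 1 - x (n - i) \<longrightarrow>
                     ((\<Sum>j=1..n. a j / (t - (1 - x j))) = 0 \<longleftrightarrow> t = y i)))
        \<and> (n \<ge> 2 \<longrightarrow> 0 < y 1 \<and> y (n - 1) < 1)
        \<and> (\<forall>i. 1 \<le> i \<and> i < n - 1 \<longrightarrow> y i < y (Suc i))
        \<and> {t. measure \<nu> {t} > 0} = {0, 1} \<union> y ` {1..n-1}
        \<and> card ({0, 1} \<union> y ` {1..n-1}) = n + 1
        \<and> measure \<nu> ({0, 1} \<union> y ` {1..n-1}) = 1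
        \<and> (\<forall>i\<in>{1..n-1}.
             ((\<lambda>z. (complex_of_real (y i) - z) * stieltjes \<nu> z)
                \<longlongrightarrow> complex_of_real (measure \<nu> {y i}))
               (at (complex_of_real (y i)) within {z. Im z > 0}))
        \<and> (\<forall>N::nat. N \<ge> 1 \<longrightarrow>
             renewal_prob (Kdisc n a x) N
               = 1 / mean_K (Kdisc n a x) + (\<Sum>i=1..n-1. y i ^ N * measure \<nu> {y i})))"
proof -
  interpret C: cor_nu n x a \<nu>
    by (intro cor_nu.intro cor.intro cor_nu_axioms.intro) (fact n_pos x_pos x_mono x_lt1 a_pos a_sum nu_prob nu_borel nu_supp nu_moments)+
  have S: "\<forall>z. Im z > 0 \<longrightarrow>
        stieltjes \<nu> z = 1 / (z * (1 - z) * (\<Sum>i=1..n. complex_of_real (a i) / (z - complex_of_real (1 - x i))))"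
    using C.stieltjes_eq C.s_formula by simp
  have Wset: "{0, 1} \<union> C.y ` {1..n-1} = C.W" unfolding C.W_def C.Y_def by auto
  have A1: "\<forall>i\<in>{1..n-1}. 1 - x (n - i + 1) < C.y i \<and> C.y i < 1 - x (n - i)
              \<and> (\<forall>t. 1 - x (n - i + 1) < t \<and> t < 1 - x (n - i) \<longrightarrow>
                     ((\<Sum>j=1..n. a j / (t - (1 - x j))) = 0 \<longleftrightarrow> t = C.y i))"
  proof
    fix i assume i: "i \<in> {1..n-1}"
    have yp: "1 - x (n - i + 1) < C.y i" "C.y i < 1 - x (n - i)" using C.y_prop[OF i] by auto
    have yu: "\<forall>t. 1 - x (n - i + 1) < t \<and> t < 1 - x (n - i) \<longrightarrow>
                     ((\<Sum>j=1..n. a j / (t - (1 - x j))) = 0 \<longleftrightarrow> t = C.y i)"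
      using C.y_unique[OF i] unfolding C.f_def by blast
    show "1 - x (n - i + 1) < C.y i \<and> C.y i < 1 - x (n - i)
              \<and> (\<forall>t. 1 - x (n - i + 1) < t \<and> t < 1 - x (n - i) \<longrightarrow>
                     ((\<Sum>j=1..n. a j / (t - (1 - x j))) = 0 \<longleftrightarrow> t = C.y i))"
      using yp yu by blast
  qed
  have A2: "n \<ge> 2 \<longrightarrow> 0 < C.y 1 \<and> C.y (n - 1) < 1"
    using C.y_01[of 1] C.y_01[of "n - 1"] by auto
  have A3: "\<forall>i. 1 \<le> i \<and> i < n - 1 \<longrightarrow> C.y i < C.y (Suc i)" using C.y_mono by blast
  have yW: "C.y i \<in> C.W" if "i \<in> {1..n-1}" for i using that unfolding C.W_def C.Y_def by auto
  have A7: "\<forall>i\<in>{1..n-1}.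
             ((\<lambda>z. (complex_of_real (C.y i) - z) * stieltjes \<nu> z)
                \<longlongrightarrow> complex_of_real (measure \<nu> {C.y i}))
               (at (complex_of_real (C.y i)) within {z. Im z > 0})"
  proof
    fix i assume i: "i \<in> {1..n-1}"
    have "measure \<nu> {C.y i} = C.c (C.y i)" using C.atom yW[OF i] by simp
    then show "((\<lambda>z. (complex_of_real (C.y i) - z) * stieltjes \<nu> z)
                \<longlongrightarrow> complex_of_real (measure \<nu> {C.y i}))
               (at (complex_of_real (C.y i)) within {z. Im z > 0})"
      using C.residue[OF yW[OF i], of "stieltjes \<nu>"] C.stieltjes_eq by simp
  qed
  have A8: "\<forall>N::nat. N \<ge> 1 \<longrightarrow>
             renewal_prob (Kdisc n a x) N
               = 1 / mean_K (Kdisc n a x) + (\<Sum>i=1..n-1. C.y i ^ N * measure \<nu> {C.y i})"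
  proof (intro allI impI)
    fix N :: nat assume N: "N \<ge> 1"
    have "renewal_prob (Kdisc n a x) N = (\<Sum>w\<in>C.W. C.c w * w ^ N)" using C.renewal_v C.v_def by simp
    also have "\<dots> = C.c 0 * 0 ^ N + (C.c 1 * 1 ^ N + (\<Sum>w\<in>C.Y. C.c w * w ^ N))"
      unfolding C.W_def using C.Y_fin C.zero_notin_Y C.one_notin_Y by simp
    also have "\<dots> = 1 / mean_K (Kdisc n a x) + (\<Sum>w\<in>C.Y. C.c w * w ^ N)"
      using N C.c_one C.mean_K_val by simp
    also have "(\<Sum>w\<in>C.Y. C.c w * w ^ N) = (\<Sum>i=1..n-1. C.c (C.y i) * C.y i ^ N)"
      unfolding C.Y_def using C.y_inj by (simp add: sum.reindex)
    also have "\<dots> = (\<Sum>i=1..n-1. C.y i ^ N * measure \<nu> {C.y i})"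
      by (rule sum.cong[OF refl]) (use yW C.atom in auto)
    finally show "renewal_prob (Kdisc n a x) N
               = 1 / mean_K (Kdisc n a x) + (\<Sum>i=1..n-1. C.y i ^ N * measure \<nu> {C.y i})" .
  qed
  show ?thesis
    apply (rule conjI[OF S])
    apply (rule exI[of _ C.y])
    apply (unfold Wset)
    apply (intro conjI)
    apply (rule A1)
    apply (rule A2)
    apply (rule A3)
    apply (rule C.atoms)
    apply (rule C.card_W)
    apply (rule C.W_meas)
    apply (rule A7)
    apply (rule A8)
    done
qed

end
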